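(* Let $p, q$ be distinct primes and $n = pq$. Then the zero-divisor graph $\Gamma(\mathbb{Z}_n)$ is a very cost effective graph.
   Context: $\mathbb{Z}_n$ is the ring of residue classes modulo $n$. The zero-divisor graph $\Gamma(\mathbb{Z}_n)$ has as vertices the nonzero zero-divisors of $\mathbb{Z}_n$, two distinct vertices being adjacent iff their product is $0$. For a graph $G=(V,E)$ and $S\subseteq V$, a vertex $v\in S$ is very cost effective if $|N(v)\cap S| < |N(v)\cap (V\setminus S)|$, where $N(v)$ is the open neighborhood of $v$; $S$ is very cost effective if every vertex of $S$ is. A bipartition $\{S, V\setminus S\}$ is very cost effective if both parts are very cost effective sets, and $G$ is very cost effective if it has a very cost effective bipartition. *)

theory Defs
  imports "HOL-Computational_Algebra.Primes"
begin

text \<open>A simple graph is given by a finite vertex set V and a symmetric irreflexive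
adjacency relation E. Open neighbourhood of v: vertices of V adjacent to v.\<close>

definition nbhd :: "'a set \<Rightarrow> ('a \<Rightarrow> 'a \<Rightarrow> bool) \<Rightarrow> 'a \<Rightarrow> 'a set" where
  "nbhd V E v = {u \<in> V. E v u}"

definition very_cost_effective_vertex ::
    "'a set \<Rightarrow> ('a \<Rightarrow> 'a \<Rightarrow> bool) \<Rightarrow> 'a set \<Rightarrow> 'a \<Rightarrow> bool" where
  "very_cost_effective_vertex V E S v \<longleftrightarrow>
     card (nbhd V E v \<inter> S) < card (nbhd V E v \<inter> (V - S))"

definition very_cost_effective_set ::
    "'a set \<Rightarrow> ('a \<Rightarrow> 'a \<Rightarrow> bool) \<Rightarrow> 'a set \<Rightarrow> bool" where
  "very_cost_effective_set V E S \<longleftrightarrow> S \<subseteq> V \<and> (\<forall>v\<in>S. very_cost_effective_vertex V E S v)"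

definition very_cost_effective_graph :: "'a set \<Rightarrow> ('a \<Rightarrow> 'a \<Rightarrow> bool) \<Rightarrow> bool" where
  "very_cost_effective_graph V E \<longleftrightarrow>
     (\<exists>S \<subseteq> V. S \<noteq> {} \<and> V - S \<noteq> {} \<and> very_cost_effective_set V E S \<and> very_cost_effective_set V E (V - S))"

text \<open>Zero-divisor graph of Z_n, residues represented by 0..n-1.
Vertices: nonzero zero-divisors; adjacency: distinct with product 0 mod n.\<close>
definition zd_vertices :: "nat \<Rightarrow> nat set" where
  "zd_vertices n = {x \<in> {1..<n}. \<exists>y \<in> {1..<n}. (x * y) mod n = 0}"

definition zd_adj :: "nat \<Rightarrow> nat \<Rightarrow> nat \<Rightarrow> bool" where
  "zd_adj n x y \<longleftrightarrow> x \<noteq> y \<and> (x * y) mod n = 0"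

end

theory Submission
  imports Defs
begin

lemma not_both:
  fixes p q x :: nat
  assumes "prime p" "prime q" "p \<noteq> q" "0 < x" "x < p * q" "p dvd x" "q dvd x"
  shows False
proof -
  have "coprime p q" using assms(1-3) by (simp add: primes_coprime)
  then have "p * q dvd x" using assms(6,7) by (simp add: divides_mult)
  then show False using assms(4,5) by (meson dvd_imp_le not_le)
qed

lemma card_pos_mem:
  assumes "finite A" "a \<in> A" shows "0 < card A"
  using assms card_gt_0_iff by blast

theorem mainTheorem2:
  fixes p q :: nat
  assumes "prime p" and "prime q" and "p \<noteq> q"
  shows "very_cost_effective_graph (zd_vertices (p * q)) (zd_adj (p * q))"
proof -
  define n where "n = p * q"
  define V where "V = zd_vertices n"
  define S where "S = {x \<in> V. p dvd x}"
  have p2: "p \<ge> 2" and q2: "q \<ge> 2" using assms prime_ge_2_nat by auto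
  have pl: "p < n" unfolding n_def using p2 q2 by simp
  have ql: "q < n" unfolding n_def using p2 q2 by simp
  have finV: "finite V" unfolding V_def zd_vertices_def by simp
  have pV: "p \<in> V" unfolding V_def zd_vertices_def using pl ql p2 q2 unfolding n_def
    by (auto intro!: bexI[of _ q])
  have qV: "q \<in> V" unfolding V_def zd_vertices_def using pl ql p2 q2 unfolding n_def
    by (auto intro!: bexI[of _ p])
  have Vr: "0 < x \<and> x < n" if "x \<in> V" for x using that unfolding V_def zd_vertices_def by auto
  have pS: "p \<in> S" using pV S_def by simp
  have qnS: "q \<notin> S" using assms S_def primes_dvd_imp_eq by blast
  have qdiv: "q dvd x" if "x \<in> V" "x \<notin> S" for x
  proof -
    from that obtain y where y: "y \<in> {1..<n}" "(x*y) mod n = 0"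
      unfolding V_def zd_vertices_def by auto
    have "n dvd x*y" using y by auto
    hence pd: "p dvd x*y" and qd: "q dvd x*y" using dvd_trans[of p n "x*y"] dvd_trans[of q n "x*y"] unfolding n_def by auto
    have "\<not> p dvd x" using that S_def by auto
    hence "p dvd y" using pd assms(1) prime_dvd_mult_iff by blast
    show ?thesis
    proof (rule ccontr)
      assume "\<not> q dvd x"
      hence "q dvd y" using qd assms(2) prime_dvd_mult_iff by blast
      thus False using not_both[OF assms, of y] \<open>p dvd y\<close> y unfolding n_def by auto
    qed
  qed
  have adj: "zd_adj n x y" if "p dvd x" "q dvd y" "x \<noteq> y" for x y
  proof -
    have "p*q dvd x*y" using that by (simp add: mult_dvd_mono)
    thus ?thesis using that unfolding zd_adj_def n_def by simp
  qed
  have vS: "very_cost_effective_set V (zd_adj n) S"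
    unfolding very_cost_effective_set_def very_cost_effective_vertex_def
  proof (intro conjI ballI)
    show "S \<subseteq> V" using S_def by auto
    fix v assume v: "v \<in> S"
    have "nbhd V (zd_adj n) v \<inter> S = {}"
    proof (rule ccontr)
      assume "nbhd V (zd_adj n) v \<inter> S \<noteq> {}"
      then obtain x where "x \<in> nbhd V (zd_adj n) v \<inter> S" by blast
      hence x: "x \<in> V" "p dvd x" "(v*x) mod n = 0"
        unfolding nbhd_def S_def zd_adj_def by simp_all
      have "n dvd v*x" using x(3) by (simp add: dvd_eq_mod_eq_0)
      hence "q dvd v*x" using dvd_trans[of q n "v*x"] unfolding n_def by auto
      hence "q dvd v \<or> q dvd x" using assms(2) prime_dvd_mult_iff by blast
      moreover have "p dvd v" "v \<in> V" using v S_def by auto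
      ultimately show False using not_both[OF assms] x Vr[of x] Vr[of v] unfolding n_def by blast
    qed
    moreover have "q \<in> nbhd V (zd_adj n) v \<inter> (V - S)"
      unfolding nbhd_def using qV qnS v S_def adj[of v q] by auto
    ultimately show "card (nbhd V (zd_adj n) v \<inter> S) < card (nbhd V (zd_adj n) v \<inter> (V - S))"
      using card_pos_mem[of "nbhd V (zd_adj n) v \<inter> (V - S)" q] finV by auto
  qed
  have vT: "very_cost_effective_set V (zd_adj n) (V - S)"
    unfolding very_cost_effective_set_def very_cost_effective_vertex_def
  proof (intro conjI ballI)
    show "V - S \<subseteq> V" by auto
    fix v assume v: "v \<in> V - S"
    have vq: "q dvd v" using qdiv v by auto
    have "nbhd V (zd_adj n) v \<inter> (V - S) = {}"
    proof (rule ccontr)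
      assume "nbhd V (zd_adj n) v \<inter> (V - S) \<noteq> {}"
      then obtain x where "x \<in> nbhd V (zd_adj n) v \<inter> (V - S)" by blast
      hence x: "x \<in> V" "x \<notin> S" "(v*x) mod n = 0"
        unfolding nbhd_def zd_adj_def by simp_all
      have "n dvd v*x" using x(3) by (simp add: dvd_eq_mod_eq_0)
      hence "p dvd v*x" using dvd_trans[of p n "v*x"] unfolding n_def by auto
      hence "p dvd v \<or> p dvd x" using assms(1) prime_dvd_mult_iff by blast
      thus False using x v S_def by auto
    qed
    moreover have "p \<in> nbhd V (zd_adj n) v \<inter> (V - (V - S))"
      unfolding nbhd_def using pV pS v adj[of p v] vq by (auto simp: zd_adj_def mult.commute)
    ultimately show "card (nbhd V (zd_adj n) v \<inter> (V - S)) < card (nbhd V (zd_adj n) v \<inter> (V - (V - S)))"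
      using card_pos_mem[of "nbhd V (zd_adj n) v \<inter> (V - (V - S))" p] finV by auto
  qed
  have "very_cost_effective_graph V (zd_adj n)"
    unfolding very_cost_effective_graph_def
    using vS vT pS qV qnS S_def by (intro exI[of _ S]) auto
  thus ?thesis unfolding V_def n_def .
qed

end
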